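(* Let $\vec k$ be a vector of positive integers with $\ell(\vec k)=1$ or $\ell(\vec k)=2$. Then $\mathrm{depth}(\pi)=\mathrm{bounce}(\pi)$ for every $\pi\in\mathcal D_{\vec k}$. In particular, $$\sum_{\pi\in\mathcal D_{\vec k}}q^{\mathrm{area}(\pi)}t^{\mathrm{depth}(\pi)}=\sum_{\pi\in\mathcal D_{\vec k}}q^{\mathrm{area}(\pi)}t^{\mathrm{bounce}(\pi)}.$$
   Context: For $\vec k=(k_1,\dots,k_\ell)$ put $|\vec k|=\sum k_i$, $N=|\vec k|+\ell$. A $\vec k$-Dyck path is a word $\pi=\pi_1\cdots\pi_N$ containing the letters $S^{k_1},\dots,S^{k_\ell}$ exactly once each and in this order, together with $|\vec k|$ letters $W$, such that all starting ranks are nonnegative, where $r_1=0$, $r_{i+1}=r_i+k_j$ if $\pi_i=S^{k_j}$ and $r_{i+1}=r_i-1$ if $\pi_i=W$. $\mathcal D_{\vec k}$ is the set of such paths. $\mathrm{area}(\pi)=\sum_j a_j$ where $a_j$ is the starting rank of $S^{k_j}$. Filling algorithms: in a tableau of $\ell$ top-justified columns, column $i$ having $k_i+1$ cells, place $1$ at the top of column 1; for $i=2,\dots,N$, call an entry active if it is currently the bottom entry of a column $i'$ not yet containing $k_{i'}+1$ entries; if $\pi_i=W$ place $i$ immediately below the smallest active entry (algorithm $\eta$) resp. the largest active entry (algorithm $\eta_*$); otherwise place $i$ at the top of the first empty column. Ranking: for a filled tableau $F$, column 1 gets ranks $0,\dots,k_1$ top to bottom; for $i\ge2$, if the top entry of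 column $i$ of $F$ is $A+1$ and $A$ has rank $\alpha$, column $i$ gets ranks $\alpha,\dots,\alpha+k_i$ top to bottom. $\mathrm{bounce}(\pi)$ is the sum of the first-row ranks for $F=\eta(\pi)$, and $\mathrm{depth}(\pi)$ is the sum of the first-row ranks for $F=\eta_*(\pi)$. *)

theory Defs
  imports Main
begin

text \<open>Letters of a k-Dyck path: S j stands for the letter S^{k_j} (0-based index j),
  W is a west step.\<close>
datatype letter = S nat | W

definition step :: "nat list \<Rightarrow> letter \<Rightarrow> int" where
  "step k x = (case x of S j \<Rightarrow> int (k ! j) | W \<Rightarrow> -1)"

text \<open>Starting rank of the letter at 0-based position i (= r_{i+1} in the paper).\<close>
definition start_rank :: "nat list \<Rightarrow> letter list \<Rightarrow> nat \<Rightarrow> int" where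
  "start_rank k p i = sum_list (map (step k) (take i p))"

definition is_dyck :: "nat list \<Rightarrow> letter list \<Rightarrow> bool" where
  "is_dyck k p \<longleftrightarrow>
     filter (\<lambda>x. x \<noteq> W) p = map S [0..<length k] \<and>
     length (filter (\<lambda>x. x = W) p) = sum_list k \<and>
     (\<forall>i < length p. start_rank k p i \<ge> 0)"

definition dyck_paths :: "nat list \<Rightarrow> letter list set" where
  "dyck_paths k = {p. is_dyck k p}"

definition area :: "nat list \<Rightarrow> letter list \<Rightarrow> nat" where
  "area k p = (\<Sum>i \<in> {i. i < length p \<and> p ! i \<noteq> W}. nat (start_rank k p i))"

text \<open>Tableaux: list of columns (column c has target size k!c + 1), each column listed
  top to bottom.\<close>
definition active_cols :: "nat list \<Rightarrow> nat list list \<Rightarrow> nat set" where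
  "active_cols k T = {c. c < length T \<and> T ! c \<noteq> [] \<and> length (T ! c) < k ! c + 1}"

definition fill_step ::
  "(nat set \<Rightarrow> nat) \<Rightarrow> nat list \<Rightarrow> nat list list \<Rightarrow> nat \<Rightarrow> letter \<Rightarrow> nat list list" where
  "fill_step sel k T i x =
     (case x of
        W \<Rightarrow> (let m = sel ((\<lambda>c. last (T ! c)) ` active_cols k T);
                   c = (LEAST c. c \<in> active_cols k T \<and> last (T ! c) = m)
               in T[c := T ! c @ [i]])
      | S _ \<Rightarrow> (let c = (LEAST c. c < length T \<and> T ! c = []) in T[c := [i]]))"

definition fill :: "(nat set \<Rightarrow> nat) \<Rightarrow> nat list \<Rightarrow> letter list \<Rightarrow> nat list list" where
  "fill sel k p =
     foldl (\<lambda>T i. fill_step sel k T i (p ! (i - 1)))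
           ([1] # replicate (length k - 1) []) [2..<length p + 1]"

definition eta :: "nat list \<Rightarrow> letter list \<Rightarrow> nat list list" where
  "eta = fill Min"

definition eta_star :: "nat list \<Rightarrow> letter list \<Rightarrow> nat list list" where
  "eta_star = fill Max"

text \<open>Ranking: tops is the list of ranks of the top cells of the columns already ranked;
  the rank of an entry A lying in an already ranked column c at row r (0-based) is
  tops!c + r.\<close>
definition entry_rank :: "nat list list \<Rightarrow> nat list \<Rightarrow> nat \<Rightarrow> nat" where
  "entry_rank F tops A =
     (let c = (LEAST c. c < length tops \<and> A \<in> set (F ! c));
          r = (LEAST r. r < length (F ! c) \<and> F ! c ! r = A)
      in tops ! c + r)"

definition top_ranks :: "nat list list \<Rightarrow> nat list" where
  "top_ranks F =
     foldl (\<lambda>tops i. tops @ [entry_rank F tops (hd (F ! i) - 1)]) [0] [1..<length F]"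

definition bounce :: "nat list \<Rightarrow> letter list \<Rightarrow> nat" where
  "bounce k p = sum_list (top_ranks (eta k p))"

definition depth :: "nat list \<Rightarrow> letter list \<Rightarrow> nat" where
  "depth k p = sum_list (top_ranks (eta_star k p))"

end

theory Submission
  imports Defs
begin

lemma length_fill_step: "length (fill_step sel k T i x) = length T"
  by (cases x) (simp_all add: fill_step_def Let_def)

lemma length_fill_foldl:
  "length (foldl (\<lambda>T i. fill_step sel k T i (p ! (i - 1))) T0 xs) = length T0"
  by (induction xs arbitrary: T0) (simp_all add: length_fill_step)

lemma W_step: "\<exists>c. fill_step sel k T i W = T[c := T ! c @ [i]]"
  unfolding fill_step_def Let_def by (simp; blast)

lemma tail_inv:
  assumes "\<forall>i \<in> set xs. p ! (i - 1) = W"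
  shows "\<exists>X' Y'. foldl (\<lambda>T i. fill_step sel k T i (p ! (i - 1))) [A @ X, B # Y] xs
           = [A @ X', B # Y']"
  using assms
proof (induction xs arbitrary: X Y)
  case Nil
  then show ?case by auto
next
  case (Cons i xs)
  obtain c where c: "fill_step sel k [A @ X, B # Y] i W = [A @ X, B # Y][c := [A @ X, B # Y] ! c @ [i]]"
    using W_step by blast
  have "\<exists>X1 Y1. fill_step sel k [A @ X, B # Y] i W = [A @ X1, B # Y1]"
  proof (cases c)
    case 0
    then show ?thesis using c by auto
  next
    case (Suc c')
    then show ?thesis using c by (cases c') auto
  qed
  then obtain X1 Y1 where "fill_step sel k [A @ X, B # Y] i W = [A @ X1, B # Y1]" by blast
  then show ?case using Cons by simp
qed

lemma prefix_fill:
  assumes sel: "\<And>x. sel {x} = x"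
    and W: "\<And>i. 2 \<le> i \<Longrightarrow> i \<le> m + 1 \<Longrightarrow> p ! (i - 1) = W"
    and mk: "m \<le> k0"
  shows "n \<le> m \<Longrightarrow> foldl (\<lambda>T i. fill_step sel [k0, k1] T i (p ! (i - 1))) [[1], []] [2..<n+2]
           = [[1..<n+2], []]"
proof (induction n)
  case 0
  then show ?case by simp
next
  case (Suc n)
  have e: "[2..<Suc n + 2] = [2..<n+2] @ [n+2]" by simp
  have pw: "p ! (n + 2 - 1) = W" using W[of "n+2"] Suc.prems by simp
  have ac: "active_cols [k0, k1] [[1..<n+2], []] = {0}"
    using Suc.prems mk by (auto simp: active_cols_def less_Suc_eq)
  have l: "last [1..<n+2] = n + 1" by simp
  have lst: "(LEAST c. c \<in> {0::nat} \<and> last ([[1..<n + 2], []] ! c) = n + 1) = 0"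
    by (rule Least_equality) auto
  have "fill_step sel [k0, k1] [[1..<n+2], []] (n+2) W = [[1..<Suc n+2], []]"
    unfolding fill_step_def using ac sel lst by (simp add: Let_def)
  then show ?case using Suc e pw by simp
qed

lemma top_ranks_1: "length F = 1 \<Longrightarrow> top_ranks F = [0]"
  by (simp add: top_ranks_def)

lemma top_ranks_2: "top_ranks [[1..<m+2] @ X, (m+2) # Y] = [0, m]"
proof -
  have c: "(LEAST c. c < length [0::nat] \<and> m + 1 \<in> set ([[1..<m+2] @ X, (m+2) # Y] ! c)) = 0"
    by (rule Least_equality) auto
  have r: "(LEAST r. r < length ([1..<m+2] @ X) \<and> ([1..<m+2] @ X) ! r = m + 1) = m"
  proof (rule Least_equality)
    show "m < length ([1..<m+2] @ X) \<and> ([1..<m+2] @ X) ! m = m + 1"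
      by (simp add: nth_append)
  next
    fix y assume a: "y < length ([1..<m+2] @ X) \<and> ([1..<m+2] @ X) ! y = m + 1"
    show "m \<le> y"
    proof (rule ccontr)
      assume "\<not> m \<le> y"
      then have "y < length [1..<m+2]" by simp
      then have "([1..<m+2] @ X) ! y = [1..<m+2] ! y" by (simp add: nth_append)
      also have "\<dots> = y + 1" using \<open>y < length [1..<m+2]\<close> by (simp del: upt_Suc)
      finally have "([1..<m+2] @ X) ! y = y + 1" .
      then show False using a \<open>\<not> m \<le> y\<close> by simp
    qed
  qed
  show ?thesis
    unfolding top_ranks_def entry_rank_def using c r by (simp add: Let_def)
qed

definition tw :: "letter list \<Rightarrow> nat" where
  "tw p = length (takeWhile (\<lambda>x. x \<noteq> S 1) p) - 1"

lemma fill_shape: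
  assumes sel: "\<And>x. sel {x} = x"
    and d: "is_dyck [k0, k1] p"
  shows "\<exists>X Y. fill sel [k0, k1] p = [[1..<tw p+2] @ X, (tw p+2) # Y]"
proof -
  let ?k = "[k0, k1]"
  have f: "filter (\<lambda>x. x \<noteq> W) p = [S 0, S 1]" using d by (simp add: is_dyck_def upt_rec)
  have sr: "\<forall>i < length p. start_rank ?k p i \<ge> 0" using d by (simp add: is_dyck_def)
  obtain us r1 where p1: "p = us @ S 0 # r1" and us: "\<forall>u\<in>set us. u = W"
    and f1: "filter (\<lambda>x. x \<noteq> W) r1 = [S 1]"
    using filter_eq_Cons_iff[THEN iffD1, OF f] by force
  obtain vs ws where r1: "r1 = vs @ S 1 # ws" and vs: "\<forall>u\<in>set vs. u = W"
    and ws: "filter (\<lambda>x. x \<noteq> W) ws = []"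
    using filter_eq_Cons_iff[THEN iffD1, OF f1] by force
  have wsW: "\<forall>u\<in>set ws. u = W" using ws by (simp add: filter_empty_conv)
  have "us = []"
  proof (rule ccontr)
    assume "us \<noteq> []"
    then obtain u us' where "us = u # us'" by (cases us) auto
    then have "p ! 0 = W" "1 < length p" using us p1 by auto
    then have "start_rank ?k p 1 = -1"
      by (cases p) (auto simp: start_rank_def step_def)
    then show False using sr \<open>1 < length p\<close> by fastforce
  qed
  then have p: "p = S 0 # vs @ S 1 # ws" using p1 r1 by simp
  define m where "m = length vs"
  have vsr: "vs = replicate m W" using vs m_def by (simp add: replicate_length_same)
  have "start_rank ?k p (m+1) = int k0 - int m"
    unfolding start_rank_def p using vsr by (simp add: step_def sum_list_replicate)
  moreover have "m + 1 < length p" using p m_def by simp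
  ultimately have mk: "m \<le> k0" using sr by fastforce
  have Wp: "p ! (i - 1) = W" if "2 \<le> i" "i \<le> m + 1" for i
  proof -
    have "p ! (i - 1) = vs ! (i - 2)" using that p m_def
      by (cases i) (auto simp: nth_append)
    then show ?thesis using that vsr by simp
  qed
  have pS: "p ! (m + 2 - 1) = S 1" using p m_def by (simp add: nth_append)
  have Wt: "\<forall>i \<in> set [m+3..<length p + 1]. p ! (i - 1) = W"
  proof
    fix i assume "i \<in> set [m+3..<length p + 1]"
    then have i: "m + 3 \<le> i" "i \<le> length p" by auto
    obtain j where j: "i = m + 3 + j" using i(1) le_Suc_ex by blast
    have "p ! (i - 1) = (S 0 # vs @ S 1 # ws) ! (Suc (length vs + Suc j))" using j p m_def by simp
    also have "\<dots> = ws ! j" by (simp add: nth_append)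
    finally have "p ! (i - 1) = ws ! (i - 1 - (m + 2))" using j by simp
    moreover have "i - 1 - (m + 2) < length ws" using i p m_def by simp
    ultimately show "p ! (i - 1) = W" using wsW by simp
  qed
  have lp: "length p = m + 2 + length ws" using p m_def by simp
  have split: "[2..<length p + 1] = [2..<m+2] @ [m+2] @ [m+3..<length p + 1]"
  proof -
    have "[2..<length p + 1] = [2..<m+2] @ [m+2..<length p + 1]"
      using upt_add_eq_append[of 2 "m+2" "length ws + 1"] lp by (simp add: add.assoc)
    moreover have "[m+2..<length p + 1] = (m+2) # [m+3..<length p + 1]"
    proof -
      have "m+2 < length p + 1" using lp by simp
      then have "[m+2..<length p + 1] = (m+2) # [Suc (m+2)..<length p + 1]" by (rule upt_conv_Cons)
      moreover have "Suc (m+2) = m + 3" by simp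
      ultimately show ?thesis by metis
    qed
    ultimately show ?thesis by simp
  qed
  let ?f = "\<lambda>T i. fill_step sel ?k T i (p ! (i - 1))"
  have pre: "foldl ?f [[1], []] [2..<m+2] = [[1..<m+2], []]"
    using prefix_fill[OF sel Wp mk] by simp
  have st: "fill_step sel ?k [[1..<m+2], []] (m+2) (S 1) = [[1..<m+2] @ [], [m+2]]"
  proof -
    have "(LEAST c. c < length [[1..<m+2], []] \<and> [[1..<m+2], []] ! c = []) = 1"
      by (rule Least_equality) (auto simp: less_Suc_eq)
    then show ?thesis by (simp add: fill_step_def Let_def)
  qed
  obtain X Y where "foldl ?f [[1..<m+2] @ [], [m+2]] [m+3..<length p + 1] = [[1..<m+2] @ X, (m+2) # Y]"
    using tail_inv[OF Wt, of sel ?k "[1..<m+2]" "[]" "m+2" "[]"] by auto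
  moreover have "fill sel ?k p = foldl ?f [[1..<m+2] @ [], [m+2]] [m+3..<length p + 1]"
    unfolding fill_def split using pre st pS by simp
  moreover have "tw p = m" unfolding tw_def p m_def using vs
  proof -
    have "takeWhile (\<lambda>x. x \<noteq> S 1) (vs @ S 1 # ws) = vs @ takeWhile (\<lambda>x. x \<noteq> S 1) (S 1 # ws)"
      by (rule takeWhile_append2) (use vs in auto)
    then show "length (takeWhile (\<lambda>x. x \<noteq> S 1) (S 0 # vs @ S 1 # ws)) - 1 = length vs" by simp
  qed
  ultimately show ?thesis by auto
qed

lemma depth_eq_bounce:
  assumes "length k = 1 \<or> length k = 2" and "p \<in> dyck_paths k"
  shows "depth k p = bounce k p"
proof (cases "length k = 1")
  case True
  have "length (fill sel k p) = 1" for sel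
    unfolding fill_def by (subst length_fill_foldl) (simp add: True)
  then show ?thesis by (simp add: depth_def bounce_def eta_def eta_star_def top_ranks_1)
next
  case False
  then obtain k0 k1 where k: "k = [k0, k1]" using assms(1)
    by (cases k; cases "tl k"; auto)
  have d: "is_dyck [k0, k1] p" using assms(2) k by (simp add: dyck_paths_def)
  obtain X Y where 1: "fill Min [k0, k1] p = [[1..<tw p+2] @ X, (tw p+2) # Y]"
    using fill_shape[of Min, OF _ d] by auto
  obtain X' Y' where 2: "fill Max [k0, k1] p = [[1..<tw p+2] @ X', (tw p+2) # Y']"
    using fill_shape[of Max, OF _ d] by auto
  show ?thesis unfolding depth_def bounce_def eta_def eta_star_def k 1 2 top_ranks_2 ..
qed

theorem proposition5p5:
  fixes k :: "nat list" and q t :: "'a :: comm_semiring_1"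
  assumes "\<forall>x \<in> set k. 0 < x"
    and "length k = 1 \<or> length k = 2"
  shows "(\<forall>p \<in> dyck_paths k. depth k p = bounce k p) \<and>
         (\<Sum>p \<in> dyck_paths k. q ^ area k p * t ^ depth k p) =
         (\<Sum>p \<in> dyck_paths k. q ^ area k p * t ^ bounce k p)"
  using depth_eq_bounce[OF assms(2)] by (auto intro: sum.cong)

end
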